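(* Let $A=\mathrm{diag}(\lambda_1,\ldots,\lambda_n)$ with $1=\lambda_1\le\lambda_2\le\cdots\le\lambda_n$, let $b\in\mathbb{R}^n$, and $f(x)=\tfrac12x^TAx-b^Tx$, with gradient $g(x)=Ax-b$. Consider the gradient method $x_{k+1}=x_k-\alpha_kg_k$, $g_k=g(x_k)$, started from $x_1\in\mathbb{R}^n$ with an arbitrary first stepsize $\alpha_1>0$, and for $k\ge2$ (as long as $g_{k-1}\neq0$) $$\alpha_k=\gamma_k\frac{s_{k-1}^Ts_{k-1}}{s_{k-1}^Ty_{k-1}}+(1-\gamma_k)\frac{s_{k-1}^Ty_{k-1}}{y_{k-1}^Ty_{k-1}},\qquad s_{k-1}=x_k-x_{k-1},\ y_{k-1}=g_k-g_{k-1},$$ where $\gamma_k\in[0,1]$ for every $k$. Then either $g_k=0$ for some finite $k$, or the sequence $\{\|g_k\|\}$ converges to zero $R$-linearly.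
   Context: $\|\cdot\|$ is the Euclidean norm. A nonnegative sequence $\{a_k\}$ converges to zero $R$-linearly if there exist constants $C>0$ and $c\in(0,1)$ with $a_k\le Cc^k$ for all $k$. *)

theory Defs
  imports Complex_Main
begin

text \<open>Vectors in R^n are represented as functions nat => real, with coordinates 1..n.\<close>

definition vinner :: "nat \<Rightarrow> (nat \<Rightarrow> real) \<Rightarrow> (nat \<Rightarrow> real) \<Rightarrow> real" where
  "vinner n u v = (\<Sum>i=1..n. u i * v i)"

definition vnorm :: "nat \<Rightarrow> (nat \<Rightarrow> real) \<Rightarrow> real" where
  "vnorm n u = sqrt (vinner n u u)"

definition grad :: "(nat \<Rightarrow> real) \<Rightarrow> (nat \<Rightarrow> real) \<Rightarrow> (nat \<Rightarrow> real) \<Rightarrow> (nat \<Rightarrow> real)" where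
  "grad lam b x = (\<lambda>i. lam i * x i - b i)"

end

theory Submission
  imports Defs
begin

lemma wavg:
  fixes w lam :: "nat \<Rightarrow> real"
  assumes ln: "l < n" and w0: "\<And>i. i \<in> {1..n} \<Longrightarrow> 0 \<le> w i"
    and lampos: "0 \<le> lam (Suc l)"
    and lamge: "\<And>i. i \<in> {Suc l..n} \<Longrightarrow> lam (Suc l) \<le> lam i"
    and lam0: "\<And>i. i \<in> {1..n} \<Longrightarrow> 0 \<le> lam i"
    and big: "w (Suc l) \<ge> 2 * (\<Sum>i=1..l. w i)"
  shows "2 * lam (Suc l) * (\<Sum>i=1..n. w i) \<le> 3 * (\<Sum>i=1..n. lam i * w i)"
proof -
  have split: "\<And>f::nat\<Rightarrow>real. (\<Sum>i=1..n. f i) = (\<Sum>i=1..l. f i) + (\<Sum>i=Suc l..n. f i)"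
  proof -
    fix f :: "nat \<Rightarrow> real"
    have "{1..n} = {1..l} \<union> {Suc l..n}" using ln by auto
    moreover have "{1..l} \<inter> {Suc l..n} = {}" by auto
    ultimately show "(\<Sum>i=1..n. f i) = (\<Sum>i=1..l. f i) + (\<Sum>i=Suc l..n. f i)"
      by (simp add: sum.union_disjoint)
  qed
  define A where "A = (\<Sum>i=1..l. w i)"
  define B where "B = (\<Sum>i=Suc l..n. w i)"
  have "w (Suc l) \<le> B" unfolding B_def
    by (rule member_le_sum) (use ln w0 in auto)
  hence AB: "2 * A \<le> B" using big A_def by simp
  have A0: "0 \<le> A" unfolding A_def by (rule sum_nonneg) (use w0 ln in auto)
  have "lam (Suc l) * B = (\<Sum>i=Suc l..n. lam (Suc l) * w i)" unfolding B_def by (simp add: sum_distrib_left)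
  also have "\<dots> \<le> (\<Sum>i=Suc l..n. lam i * w i)"
    by (rule sum_mono) (use lamge w0 in \<open>auto intro: mult_right_mono\<close>)
  also have "\<dots> \<le> (\<Sum>i=1..n. lam i * w i)"
    using split[of "\<lambda>i. lam i * w i"] sum_nonneg[of "{1..l}" "\<lambda>i. lam i * w i"] lam0 w0 ln by auto
  finally have "lam (Suc l) * B \<le> (\<Sum>i=1..n. lam i * w i)" .
  moreover have "(\<Sum>i=1..n. w i) = A + B" using split A_def B_def by simp
  moreover have "lam (Suc l) * (2*A) \<le> lam (Suc l) * B" by (rule mult_left_mono[OF AB lampos])
  moreover have "2 * lam (Suc l) * (A + B) = lam (Suc l) * (2*A) + 2 * (lam (Suc l) * B)"
    by (simp add: algebra_simps)
  ultimately have "2 * lam (Suc l) * (A + B) \<le> 3 * (\<Sum>i=1..n. lam i * w i)" by linarith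
  then show ?thesis using \<open>(\<Sum>i=1..n. w i) = A + B\<close> by simp
qed

lemma ratio_bounds:
  fixes lam g :: "nat \<Rightarrow> real"
  assumes lb: "\<And>i. i\<in>{1..n} \<Longrightarrow> 1 \<le> lam i \<and> lam i \<le> L" and nz: "\<exists>i\<in>{1..n}. g i \<noteq> 0"
  shows "0 < (\<Sum>i=1..n. g i ^ 2)"
    "(\<Sum>i=1..n. g i ^ 2) \<le> (\<Sum>i=1..n. lam i * g i ^ 2)"
    "(\<Sum>i=1..n. lam i * g i ^ 2) \<le> L * (\<Sum>i=1..n. g i ^ 2)"
    "(\<Sum>i=1..n. lam i * g i ^ 2) \<le> (\<Sum>i=1..n. lam i * (lam i * g i ^ 2))"
    "(\<Sum>i=1..n. lam i * (lam i * g i ^ 2)) \<le> L * (\<Sum>i=1..n. lam i * g i ^ 2)"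
proof -
  obtain j where j: "j \<in> {1..n}" "g j \<noteq> 0" using nz by auto
  have "0 < g j ^ 2" using j by simp
  also have "g j ^ 2 \<le> (\<Sum>i=1..n. g i ^ 2)" by (rule member_le_sum) (use j in auto)
  finally show "0 < (\<Sum>i=1..n. g i ^ 2)" .
  show "(\<Sum>i=1..n. g i ^ 2) \<le> (\<Sum>i=1..n. lam i * g i ^ 2)"
  proof (rule sum_mono)
    fix i assume "i \<in> {1..n}"
    hence "1 \<le> lam i" using lb by auto
    then show "g i ^ 2 \<le> lam i * g i ^ 2"
      using mult_right_mono[of 1 "lam i" "g i ^ 2"] by simp
  qed
  show "(\<Sum>i=1..n. lam i * g i ^ 2) \<le> L * (\<Sum>i=1..n. g i ^ 2)"
    unfolding sum_distrib_left by (rule sum_mono) (use lb in \<open>auto intro: mult_right_mono\<close>)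
  show "(\<Sum>i=1..n. lam i * g i ^ 2) \<le> (\<Sum>i=1..n. lam i * (lam i * g i ^ 2))"
  proof (rule sum_mono)
    fix i assume "i \<in> {1..n}"
    hence "1 \<le> lam i" using lb by auto
    then show "lam i * g i ^ 2 \<le> lam i * (lam i * g i ^ 2)"
      using mult_right_mono[of 1 "lam i" "lam i * g i ^ 2"] by simp
  qed
  show "(\<Sum>i=1..n. lam i * (lam i * g i ^ 2)) \<le> L * (\<Sum>i=1..n. lam i * g i ^ 2)"
    unfolding sum_distrib_left
  proof (rule sum_mono)
    fix i assume "i \<in> {1..n}"
    hence "1 \<le> lam i" "lam i \<le> L" using lb by auto
    then show "lam i * (lam i * g i ^ 2) \<le> L * (lam i * g i ^ 2)"
      by (intro mult_right_mono) auto
  qed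
qed

lemma alpha_range:
  fixes P Q R L gm :: real
  assumes "0 < P" "P \<le> Q" "Q \<le> L * P" "Q \<le> R" "R \<le> L * Q" "0 \<le> gm" "gm \<le> 1"
  shows "1 / L \<le> gm * (P/Q) + (1-gm) * (Q/R)" "gm * (P/Q) + (1-gm) * (Q/R) \<le> 1"
proof -
  have PL: "1 * P \<le> L * P" using assms by linarith
  have Q: "0 < Q" "0 < R" "1 \<le> L" using assms mult_le_cancel_right_pos[of P 1 L, OF assms(1)] PL by auto
  have a: "1/L \<le> P/Q" "P/Q \<le> 1" "1/L \<le> Q/R" "Q/R \<le> 1"
    using assms Q by (auto simp: field_simps)
  show "1 / L \<le> gm * (P/Q) + (1-gm) * (Q/R)"
    using convex_bound_le[of "-(P/Q)" "-(1/L)" "-(Q/R)" gm "1-gm"] a assms by auto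
  show "gm * (P/Q) + (1-gm) * (Q/R) \<le> 1"
    using convex_bound_le[of "P/Q" 1 "Q/R" gm "1-gm"] a assms by auto
qed

lemma alpha_contr:
  fixes P Q R gm lm :: real
  assumes "0 < P" "P \<le> Q" "Q \<le> R" "0 \<le> gm" "gm \<le> 1" "0 < lm"
    "2 * lm * P \<le> 3 * Q" "2 * lm * Q \<le> 3 * R"
  shows "2 * lm * (gm * (P/Q) + (1-gm) * (Q/R)) \<le> 3"
proof -
  have Q: "0 < Q" "0 < R" using assms by auto
  have a: "2 * lm * (P/Q) \<le> 3" "2 * lm * (Q/R) \<le> 3" using assms Q by (auto simp: field_simps)
  have "2 * lm * (gm * (P/Q) + (1-gm) * (Q/R)) = gm * (2 * lm * (P/Q)) + (1-gm) * (2 * lm * (Q/R))"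
    by (simp add: algebra_simps)
  also have "\<dots> \<le> 3" using convex_bound_le[OF a, of gm "1-gm"] assms by auto
  finally show ?thesis .
qed

lemma factor_bound:
  fixes a lm L :: real
  assumes "1/L \<le> a" "a \<le> 1" "1 \<le> lm" "lm \<le> L"
  shows "\<bar>1 - a * lm\<bar> \<le> L"
    "2 * lm * a \<le> 3 \<Longrightarrow> \<bar>1 - a * lm\<bar> \<le> max (1/2) (1 - 1/L)"
proof -
  have L: "1 \<le> L" using assms by auto
  have "0 < 1/L" using L by simp
  hence a0: "0 < a" using assms by linarith
  have "a * lm \<le> 1 * L" using assms by (intro mult_mono) auto
  moreover have "0 \<le> a * lm" using assms a0 by simp
  ultimately show "\<bar>1 - a * lm\<bar> \<le> L" using L by auto
  assume h: "2 * lm * a \<le> 3"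
  have "1/L * 1 \<le> a * lm" using assms L a0 by (intro mult_mono) auto
  have h2: "a * lm \<le> 3/2" using h by (simp add: mult.commute mult.left_commute)
  have "1 - a * lm \<le> max (1/2) (1 - 1/L)" using \<open>1/L * 1 \<le> a * lm\<close> by simp
  moreover have "-(1 - a * lm) \<le> max (1/2) (1 - 1/L)" using h2 by simp
  ultimately show "\<bar>1 - a * lm\<bar> \<le> max (1/2) (1 - 1/L)" by (simp add: abs_le_iff)
qed


theorem theorem3:
  fixes n :: nat and lam b :: "nat \<Rightarrow> real"
    and x :: "nat \<Rightarrow> nat \<Rightarrow> real" and alpha gamma :: "nat \<Rightarrow> real"
  assumes n_pos: "n \<ge> 1"
    and lam1: "lam 1 = 1"
    and lam_sorted: "\<And>i. 1 \<le> i \<Longrightarrow> i < n \<Longrightarrow> lam i \<le> lam (Suc i)"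
    and gamma_range: "\<And>k. 0 \<le> gamma k \<and> gamma k \<le> 1"
    and alpha1: "alpha 1 > 0"
    and iter: "\<And>k i. 1 \<le> k \<Longrightarrow> 1 \<le> i \<Longrightarrow> i \<le> n \<Longrightarrow>
                 x (Suc k) i = x k i - alpha k * grad lam b (x k) i"
    and step: "\<And>k. 2 \<le> k \<Longrightarrow> (\<exists>i\<in>{1..n}. grad lam b (x (k - 1)) i \<noteq> 0) \<Longrightarrow>
                 (let s = (\<lambda>i. x k i - x (k - 1) i);
                      y = (\<lambda>i. grad lam b (x k) i - grad lam b (x (k - 1)) i)
                  in alpha k = gamma k * (vinner n s s / vinner n s y)
                             + (1 - gamma k) * (vinner n s y / vinner n y y))"
  shows "(\<exists>k\<ge>1. \<forall>i\<in>{1..n}. grad lam b (x k) i = 0)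
         \<or> (\<exists>C c. C > 0 \<and> 0 < c \<and> c < 1 \<and>
               (\<forall>k\<ge>1. vnorm n (grad lam b (x k)) \<le> C * c ^ k))"
proof (cases "\<exists>k\<ge>1. \<forall>i\<in>{1..n}. grad lam b (x k) i = 0")
  case True
  then show ?thesis by blast
next
  case False
  then have nz0: "\<not> (\<exists>k\<ge>1. \<forall>i\<in>{1..n}. grad lam b (x k) i = 0)" .
  define g where "g = (\<lambda>k i. grad lam b (x k) i)"
  define L where "L = lam n"
  have nz: "\<And>k. 1 \<le> k \<Longrightarrow> \<exists>i\<in>{1..n}. g k i \<noteq> 0" using nz0 unfolding g_def by blast
  have lam_mono': "\<forall>i. 1 \<le> i \<longrightarrow> i \<le> j \<longrightarrow> j \<le> n \<longrightarrow> lam i \<le> lam j" for j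
  proof (induction j)
    case 0 then show ?case by auto
  next
    case (Suc j)
    show ?case
    proof (intro allI impI)
      fix i assume h: "1 \<le> i" "i \<le> Suc j" "Suc j \<le> n"
      show "lam i \<le> lam (Suc j)"
      proof (cases "i = Suc j")
        case True then show ?thesis by simp
      next
        case False
        hence "i \<le> j" using h by simp
        hence "lam i \<le> lam j" using Suc.IH h by auto
        also have "lam j \<le> lam (Suc j)" using lam_sorted[of j] h \<open>i \<le> j\<close> by auto
        finally show ?thesis .
      qed
    qed
  qed
  have lam_mono: "\<And>i j. 1 \<le> i \<Longrightarrow> i \<le> j \<Longrightarrow> j \<le> n \<Longrightarrow> lam i \<le> lam j"
    using lam_mono' by blast
  have lam_b: "\<And>i. i \<in> {1..n} \<Longrightarrow> 1 \<le> lam i \<and> lam i \<le> L"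
    using lam_mono[of 1] lam_mono[of _ n] lam1 unfolding L_def by force
  have L1: "1 \<le> L" using lam_b[of n] n_pos by auto
  have grec: "g (Suc k) i = (1 - alpha k * lam i) * g k i" if "1 \<le> k" "i \<in> {1..n}" for k i
  proof -
    have e: "x (Suc k) i = x k i - alpha k * (lam i * x k i - b i)"
      using iter[of k i] that by (simp add: grad_def)
    show ?thesis unfolding g_def grad_def e by (simp add: algebra_simps)
  qed
  define P where "P k = (\<Sum>i=1..n. g k i ^ 2)" for k
  define Q where "Q k = (\<Sum>i=1..n. lam i * g k i ^ 2)" for k
  define R where "R k = (\<Sum>i=1..n. lam i * (lam i * g k i ^ 2))" for k
  have afor: "alpha k = gamma k * (P (k-1) / Q (k-1)) + (1 - gamma k) * (Q (k-1) / R (k-1))"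
    if k: "2 \<le> k" and a0: "alpha (k-1) \<noteq> 0" for k
  proof -
    define a where "a = alpha (k-1)"
    define s where "s = (\<lambda>i. x k i - x (k - 1) i)"
    define y where "y = (\<lambda>i. grad lam b (x k) i - grad lam b (x (k - 1)) i)"
    have kk: "Suc (k-1) = k" using k by simp
    have sk: "s i = - a * g (k-1) i" if "i \<in> {1..n}" for i
      using iter[of "k-1" i] k that unfolding s_def a_def g_def kk by auto
    have yk: "\<And>i. y i = lam i * s i" unfolding y_def s_def grad_def by (simp add: algebra_simps)
    have ss: "vinner n s s = a^2 * P (k-1)" unfolding vinner_def P_def sum_distrib_left
      by (rule sum.cong) (auto simp: sk power2_eq_square algebra_simps)
    have sy: "vinner n s y = a^2 * Q (k-1)" unfolding vinner_def Q_def sum_distrib_left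
      by (rule sum.cong) (auto simp: yk sk power2_eq_square algebra_simps)
    have yy: "vinner n y y = a^2 * R (k-1)" unfolding vinner_def R_def sum_distrib_left
      by (rule sum.cong) (auto simp: yk sk power2_eq_square algebra_simps)
    have nzk: "\<exists>i\<in>{1..n}. grad lam b (x (k - 1)) i \<noteq> 0" using nz[of "k-1"] k unfolding g_def by auto
    have "alpha k = gamma k * (vinner n s s / vinner n s y) + (1 - gamma k) * (vinner n s y / vinner n y y)"
      using step[OF k nzk] unfolding s_def y_def Let_def .
    moreover have "a^2 \<noteq> 0" using a0 a_def by simp
    ultimately show ?thesis unfolding ss sy yy by simp
  qed
  have rb: "0 < P k" "P k \<le> Q k" "Q k \<le> L * P k" "Q k \<le> R k" "R k \<le> L * Q k" if "1 \<le> k" for k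
    using ratio_bounds[of n lam L "g k", OF lam_b nz[OF that]] unfolding P_def Q_def R_def by auto
  have apos: "1 \<le> k \<Longrightarrow> 0 < alpha k \<and> (2 \<le> k \<longrightarrow> 1/L \<le> alpha k \<and> alpha k \<le> 1)" for k
  proof (induction k)
    case 0 then show ?case by simp
  next
    case (Suc m)
    show ?case
    proof (cases "m = 0")
      case True then show ?thesis using alpha1 by simp
    next
      case False
      hence m: "1 \<le> m" "2 \<le> Suc m" by auto
      hence "alpha m \<noteq> 0" using Suc.IH by auto
      hence af: "alpha (Suc m) = gamma (Suc m) * (P m / Q m) + (1 - gamma (Suc m)) * (Q m / R m)"
        using afor[of "Suc m"] m by simp
      have "1/L \<le> alpha (Suc m)" "alpha (Suc m) \<le> 1"
        unfolding af using alpha_range[OF rb[OF m(1)]] gamma_range by auto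
      moreover have "0 < 1/L" using L1 by simp
          ultimately show ?thesis by linarith
    qed
  qed
  have afor2: "alpha (Suc k) = gamma (Suc k) * (P k / Q k) + (1 - gamma (Suc k)) * (Q k / R k)"
    if "1 \<le> k" for k
    using afor[of "Suc k"] apos[OF that] that by simp
  have ab: "1/L \<le> alpha k" "alpha k \<le> 1" if "2 \<le> k" for k
    using apos[of k] that by auto
  define rho where "rho = max (1/2) (1 - 1/L)"
  have rho: "0 < rho" "rho < 1" using L1 unfolding rho_def by auto
  have Mb: "(g (Suc k) i)^2 \<le> L^2 * (g k i)^2" if "2 \<le> k" "i \<in> {1..n}" for k i
  proof -
    have "\<bar>1 - alpha k * lam i\<bar> \<le> L" using factor_bound(1)[OF ab[OF that(1)]] lam_b[OF that(2)] by auto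
    hence "\<bar>1 - alpha k * lam i\<bar>^2 \<le> L^2" by (intro power_mono) auto
    hence "(1 - alpha k * lam i)^2 \<le> L^2" by simp
    hence "(1 - alpha k * lam i)^2 * (g k i)^2 \<le> L^2 * (g k i)^2" by (intro mult_right_mono) auto
    then show ?thesis using grec[of k i] that by (simp add: power_mult_distrib)
  qed
  have Cb: "(g (Suc k) i)^2 \<le> rho^2 * (g k i)^2" if "2 \<le> k" "i \<in> {1..n}" "2 * lam i * alpha k \<le> 3" for k i
  proof -
    have "\<bar>1 - alpha k * lam i\<bar> \<le> rho" using factor_bound(2)[OF ab[OF that(1)] _ _ that(3)] lam_b[OF that(2)]
      unfolding rho_def by auto
    hence "\<bar>1 - alpha k * lam i\<bar>^2 \<le> rho^2" by (intro power_mono) auto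
    hence "(1 - alpha k * lam i)^2 \<le> rho^2" by simp
    hence "(1 - alpha k * lam i)^2 * (g k i)^2 \<le> rho^2 * (g k i)^2" by (intro mult_right_mono) auto
    then show ?thesis using grec[of k i] that by (simp add: power_mult_distrib)
  qed
  have main: "l \<le> n \<Longrightarrow> \<exists>C th. 0 < C \<and> 0 < th \<and> th < 1 \<and> (\<forall>k\<ge>2. (\<Sum>i=1..l. (g k i)^2) \<le> C * th^k)" for l
  proof (induction l)
    case 0 show ?case by (rule exI[of _ 1], rule exI[of _ "1/2"]) auto
  next
    case (Suc l)
    then obtain C th where C: "0<C" "0<th" "th<1" and Gb: "\<forall>k\<ge>2. (\<Sum>i=1..l. (g k i)^2) \<le> C*th^k" by auto
    have ln: "l < n" "Suc l \<in> {1..n}" using Suc.prems by auto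
    define u where "u k = (g k (Suc l))^2" for k
    define eta where "eta = max (rho^2) th"
    have eta1: "0 < eta" unfolding eta_def using C by (simp add: less_max_iff_disj)
    have eta2: "eta < 1" unfolding eta_def using rho C by (simp add: power_less_one_iff)
    have eta3: "rho^2 \<le> eta" "th \<le> eta" unfolding eta_def by simp_all
    note eta = eta1 eta2 eta3
    define D where "D = max (2*C*L^4/eta^2) (max (u 2/eta^2) (u 3/eta^3))"
    have "0 < L^4" using L1 by simp
    hence "0 < 2*C*L^4/eta^2" using C eta by simp
    hence D0: "0 < D" unfolding D_def by (simp add: less_max_iff_disj)
    have uM: "u (Suc k) \<le> L^2 * u k" if "2 \<le> k" for k unfolding u_def using Mb[OF that ln(2)] .
    have uC: "u (Suc (Suc k)) \<le> rho^2 * u (Suc k)" if k: "2 \<le> k" and big: "2*C*th^k \<le> u k" for k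
    proof -
      have k1: "1 \<le> k" using k by simp
      define G where "G = (\<Sum>i=1..l. (g k i)^2)"
      have "G \<le> C*th^k" using Gb k unfolding G_def by blast
      hence G: "2 * G \<le> u k" using big by linarith
      have lp: "0 \<le> lam (Suc l)" using lam_b[OF ln(2)] by simp
      have lge: "lam (Suc l) \<le> lam i" if "i \<in> {Suc l..n}" for i using lam_mono[of "Suc l" i] that by auto
      have l0: "0 \<le> lam i" if "i \<in> {1..n}" for i using lam_b[OF that] by simp
      have G': "2 * (\<Sum>i=1..l. g k i ^ 2) \<le> g k (Suc l) ^ 2" using G unfolding G_def u_def .
      have w1: "2 * lam (Suc l) * (\<Sum>i=1..n. g k i ^ 2) \<le> 3 * (\<Sum>i=1..n. lam i * g k i ^ 2)"
        by (rule wavg[where w="\<lambda>i. g k i ^ 2" and lam=lam, OF ln(1) _ lp lge l0 G']) simp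
      have "(\<Sum>i=1..l. lam i * g k i ^ 2) \<le> (\<Sum>i=1..l. lam (Suc l) * g k i ^ 2)"
      proof (rule sum_mono)
        fix i assume i: "i \<in> {1..l}"
        hence "lam i \<le> lam (Suc l)" using lam_mono[of i "Suc l"] ln by simp
        thus "lam i * g k i ^ 2 \<le> lam (Suc l) * g k i ^ 2" by (rule mult_right_mono) simp
      qed
      also have "\<dots> = lam (Suc l) * G" unfolding G_def by (simp add: sum_distrib_left)
      finally have big2: "2 * (\<Sum>i=1..l. lam i * g k i ^ 2) \<le> lam (Suc l) * u k"
        using G lam_b[OF ln(2)] mult_left_mono[OF G, of "lam (Suc l)"] by linarith
      have w2: "2 * lam (Suc l) * (\<Sum>i=1..n. lam i * g k i ^ 2) \<le> 3 * (\<Sum>i=1..n. lam i * (lam i * g k i ^ 2))"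
      proof (rule wavg[where w="\<lambda>i. lam i * g k i ^ 2" and lam=lam, OF ln(1) _ lp lge l0])
        show "0 \<le> lam i * g k i ^ 2" if "i \<in> {1..n}" for i using l0[OF that] by simp
        show "2 * (\<Sum>i=1..l. lam i * g k i ^ 2) \<le> lam (Suc l) * g k (Suc l) ^ 2"
          using big2 unfolding u_def .
      qed
      have "2 * lam (Suc l) * alpha (Suc k) \<le> 3"
        unfolding afor2[OF k1]
        apply (rule alpha_contr)
        using rb[OF k1] gamma_range lam_b[OF ln(2)] w1 w2 unfolding P_def Q_def R_def by auto
      hence "(g (Suc (Suc k)) (Suc l))^2 \<le> rho^2 * (g (Suc k) (Suc l))^2"
        using Cb[OF _ ln(2)] k by auto
      then show ?thesis unfolding u_def .
    qed
    have u0: "0 \<le> u k" for k unfolding u_def by simp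
    have inv: "u (Suc (Suc m)) \<le> D*eta^(Suc (Suc m)) \<and> u (Suc (Suc (Suc m))) \<le> D*eta^(Suc (Suc (Suc m)))" for m
    proof (induction m)
      case 0
      have e2: "Suc (Suc 0) = 2" and e3: "Suc (Suc (Suc 0)) = 3" by simp_all
      have q2: "0 < eta^2" and q3: "0 < eta^3" using eta by simp_all
      have "u 2/eta^2 \<le> D" "u 3/eta^3 \<le> D" unfolding D_def by auto
      hence "u 2 \<le> D*eta^2" "u 3 \<le> D*eta^3"
        using pos_divide_le_eq[OF q2] pos_divide_le_eq[OF q3] by simp_all
      then show ?case unfolding e2 e3 by simp
    next
      case (Suc m)
      define p where "p = Suc (Suc m)"
      have p2: "2 \<le> p" unfolding p_def by simp
      have IH: "u p \<le> D*eta^p" "u (Suc p) \<le> D*eta^(Suc p)" using Suc.IH unfolding p_def by auto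
      have "u (Suc (Suc p)) \<le> D*eta^(Suc (Suc p))"
      proof (cases "2*C*th^p \<le> u p")
        case True
        have "u (Suc (Suc p)) \<le> rho^2 * u (Suc p)" using uC[OF p2 True] .
        also have "\<dots> \<le> eta * (D*eta^(Suc p))" using IH eta rho u0[of "Suc p"]
          by (intro mult_mono) auto
        also have "\<dots> = D*eta^(Suc (Suc p))" by (simp add: algebra_simps)
        finally show ?thesis .
      next
        case False
        have e4: "L^4 = L^2 * L^2" using power_add[of L 2 2] by simp
        have ee: "eta^(Suc (Suc p)) = eta^2 * eta^p" by (simp add: power2_eq_square)
        have "u (Suc (Suc p)) \<le> L^2 * u (Suc p)" using uM[of "Suc p"] p2 by simp
        also have "\<dots> \<le> L^2 * (L^2 * u p)" using uM[OF p2] by (intro mult_left_mono) auto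
        also have "\<dots> = L^4 * u p" unfolding e4 by (simp add: mult.assoc)
        also have "\<dots> \<le> L^4 * (2*C*th^p)" using False by (intro mult_left_mono) auto
        also have "\<dots> \<le> L^4 * (2*C*eta^p)"
        proof -
          have "th^p \<le> eta^p" using eta C by (simp add: power_mono)
          hence "2*C*th^p \<le> 2*C*eta^p" using C by simp
          thus ?thesis using L1 by (simp add: mult_left_mono)
        qed
        also have "\<dots> = (2*C*L^4/eta^2) * eta^(Suc (Suc p))"
        proof -
          have nz: "eta^2 \<noteq> 0" using eta by simp
          have "(2*C*L^4/eta^2) * eta^(Suc (Suc p)) = (2*C*L^4/eta^2) * eta^2 * eta^p" unfolding ee by (simp only: mult.assoc)
          also have "\<dots> = 2*C*L^4 * eta^p" using nz by simp
          finally show ?thesis by (simp only: mult_ac)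
        qed
        also have "\<dots> \<le> D * eta^(Suc (Suc p))" unfolding D_def using eta by (intro mult_right_mono) auto
        finally show ?thesis .
      qed
      then show ?case using IH unfolding p_def by simp
    qed
    have uk: "u k \<le> D*eta^k" if "2 \<le> k" for k
    proof -
      define m where "m = k - 2"
      have "k = Suc (Suc m)" using that unfolding m_def by simp
      then show ?thesis using inv[of m] by simp
    qed
    show ?case
    proof (rule exI[of _ "C+D"], rule exI[of _ eta], intro conjI allI impI)
      fix k :: nat assume k: "2 \<le> k"
      have "(\<Sum>i=1..Suc l. (g k i)^2) = (\<Sum>i=1..l. (g k i)^2) + u k" unfolding u_def by simp
      also have "\<dots> \<le> C*th^k + D*eta^k"
      proof (rule add_mono)
        show "(\<Sum>i=1..l. (g k i)^2) \<le> C*th^k" using Gb k by blast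
        show "u k \<le> D*eta^k" by (rule uk[OF k])
      qed
      also have "\<dots> \<le> C*eta^k + D*eta^k" using C eta D0 by (intro add_mono mult_left_mono power_mono) auto
      finally show "(\<Sum>i=1..Suc l. (g k i)^2) \<le> (C+D)*eta^k" by (simp add: algebra_simps)
    qed (use C D0 eta in auto)
  qed
  obtain C th where C: "0<C" "0<th" "th<1" and Gb: "\<forall>k\<ge>2. (\<Sum>i=1..n. (g k i)^2) \<le> C*th^k"
    using main[of n] by auto
  define C' where "C' = max (sqrt C) (vnorm n (g 1) / sqrt th)"
  have "\<exists>C c. C > 0 \<and> 0 < c \<and> c < 1 \<and> (\<forall>k\<ge>1. vnorm n (grad lam b (x k)) \<le> C * c ^ k)"
  proof (rule exI[of _ C'], rule exI[of _ "sqrt th"], intro conjI allI impI)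
    have "0 < sqrt C" using C by simp
    then show "0 < C'" unfolding C'_def by (simp add: less_max_iff_disj)
    show "0 < sqrt th" "sqrt th < 1" using C by auto
    fix k :: nat assume k: "1 \<le> k"
    have st: "0 \<le> sqrt th" using C by simp
    have vn: "vnorm n (grad lam b (x k)) = sqrt (\<Sum>i=1..n. (g k i)^2)" for k
      unfolding vnorm_def vinner_def g_def power2_eq_square ..
    show "vnorm n (grad lam b (x k)) \<le> C' * sqrt th ^ k"
    proof (cases "k = 1")
      case True
      have "sqrt th > 0" using C by simp
      hence "vnorm n (g 1) = (vnorm n (g 1) / sqrt th) * sqrt th" by simp
      also have "\<dots> \<le> C' * sqrt th" unfolding C'_def by (rule mult_right_mono[OF max.cobounded2 st])
      finally have "vnorm n (g 1) \<le> C' * sqrt th" .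
      then show ?thesis using True unfolding g_def by simp
    next
      case False
      hence k2: "2 \<le> k" using k by simp
      have "vnorm n (grad lam b (x k)) = sqrt (\<Sum>i=1..n. (g k i)^2)" by (rule vn)
      also have "\<dots> \<le> sqrt (C * th^k)" using Gb k2 real_sqrt_le_mono by blast
      also have "\<dots> = sqrt C * sqrt th ^ k" by (simp add: real_sqrt_mult real_sqrt_power)
      also have "\<dots> \<le> C' * sqrt th ^ k" unfolding C'_def
        by (rule mult_right_mono[OF max.cobounded1 zero_le_power[OF st]])
      finally show ?thesis .
    qed
  qed
  then show ?thesis by blast
qed

end
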